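(* Let $G$ be a connected graph in $\mathcal{C}$ and $C$ an induced $C_5$ in $G$. If $X\neq\emptyset$, then $|R|\le 2$ or $X$ is a clique cutset of $G$.
   Context: $\mathcal{C}=\mathrm{Free}(\text{claw}, 4K_1, \text{5-wheel}, C_5\text{-twin}, P_5\text{-twin}, K_5-e)$, where $\mathrm{Free}(L)$ is the class of graphs with no induced subgraph isomorphic to a member of $L$; the claw is $K_{1,3}$; $4K_1$ is the edgeless graph on 4 vertices; the 5-wheel is $C_5$ plus a vertex adjacent to all five cycle vertices; the $C_5$-twin is $C_5$ plus a new vertex adjacent to one cycle vertex $v$ and both cycle-neighbours of $v$; the $P_5$-twin is a path $p_1p_2p_3p_4p_5$ plus a new vertex adjacent to exactly $p_2,p_3,p_4$; $K_5-e$ is $K_5$ minus one edge. Given an induced cycle $C$ of length 5 with vertices $0,\dots,4$ in cyclic order (indices taken mod 5): $R$ is the set of vertices outside $C$ with no neighbour in $C$; $X_j$ is the set of vertices outside $C$ whose neighbourhood in $C$ is exactly $\{j,j+1\}$; $Y_j$ is the set of vertices outside $C$ whose neighbourhood in $C$ is exactly $\{j,j+1,j+2,j+3\}$; $X=\bigcup_j X_j$, $Y=\bigcup_j Y_j$. A clique cutset of $G$ is a set $S$ of vertices inducing a clique such that $G-S$ is disconnected. *)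

theory Defs
  imports Main
begin

definition graph :: "'a set \<Rightarrow> ('a \<Rightarrow> 'a \<Rightarrow> bool) \<Rightarrow> bool" where
  "graph V E \<longleftrightarrow> finite V \<and> (\<forall>x y. E x y \<longrightarrow> x \<in> V \<and> y \<in> V)
     \<and> (\<forall>x y. E x y \<longrightarrow> E y x) \<and> (\<forall>x. \<not> E x x)"

inductive reach :: "('a \<Rightarrow> 'a \<Rightarrow> bool) \<Rightarrow> 'a set \<Rightarrow> 'a \<Rightarrow> 'a \<Rightarrow> bool"
  for E S where
  refl: "x \<in> S \<Longrightarrow> reach E S x x"
| step: "reach E S x y \<Longrightarrow> E y z \<Longrightarrow> z \<in> S \<Longrightarrow> reach E S x z"

definition connected_on :: "'a set \<Rightarrow> ('a \<Rightarrow> 'a \<Rightarrow> bool) \<Rightarrow> bool" where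
  "connected_on S E \<longleftrightarrow> S \<noteq> {} \<and> (\<forall>x\<in>S. \<forall>y\<in>S. reach E S x y)"

definition clique :: "'a set \<Rightarrow> ('a \<Rightarrow> 'a \<Rightarrow> bool) \<Rightarrow> bool" where
  "clique S E \<longleftrightarrow> (\<forall>x\<in>S. \<forall>y\<in>S. x \<noteq> y \<longrightarrow> E x y)"

definition clique_cutset :: "'a set \<Rightarrow> ('a \<Rightarrow> 'a \<Rightarrow> bool) \<Rightarrow> 'a set \<Rightarrow> bool" where
  "clique_cutset V E S \<longleftrightarrow> S \<subseteq> V \<and> clique S E \<and>
     (\<exists>x\<in>V - S. \<exists>y\<in>V - S. \<not> reach E (V - S) x y)"

definition has_induced :: "'a set \<Rightarrow> ('a \<Rightarrow> 'a \<Rightarrow> bool) \<Rightarrow> nat \<Rightarrow> (nat \<Rightarrow> nat \<Rightarrow> bool) \<Rightarrow> bool" where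
  "has_induced V E n F \<longleftrightarrow> (\<exists>f. inj_on f {0..<n} \<and> f ` {0..<n} \<subseteq> V \<and>
     (\<forall>i<n. \<forall>j<n. E (f i) (f j) \<longleftrightarrow> F i j))"

definition edges_of :: "(nat \<times> nat) list \<Rightarrow> nat \<Rightarrow> nat \<Rightarrow> bool" where
  "edges_of L i j \<longleftrightarrow> (i, j) \<in> set L \<or> (j, i) \<in> set L"

definition C5_edges :: "(nat \<times> nat) list" where
  "C5_edges = [(0,1),(1,2),(2,3),(3,4),(4,0)]"

definition claw :: "nat \<Rightarrow> nat \<Rightarrow> bool" where
  "claw = edges_of [(0,1),(0,2),(0,3)]"

definition fourK1 :: "nat \<Rightarrow> nat \<Rightarrow> bool" where
  "fourK1 = edges_of []"

definition wheel5 :: "nat \<Rightarrow> nat \<Rightarrow> bool" where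
  "wheel5 = edges_of (C5_edges @ [(5,0),(5,1),(5,2),(5,3),(5,4)])"

definition C5_twin :: "nat \<Rightarrow> nat \<Rightarrow> bool" where
  "C5_twin = edges_of (C5_edges @ [(5,4),(5,0),(5,1)])"

definition P5_twin :: "nat \<Rightarrow> nat \<Rightarrow> bool" where
  "P5_twin = edges_of [(0,1),(1,2),(2,3),(3,4),(5,1),(5,2),(5,3)]"

definition K5_minus_e :: "nat \<Rightarrow> nat \<Rightarrow> bool" where
  "K5_minus_e = edges_of [(0,2),(0,3),(0,4),(1,2),(1,3),(1,4),(2,3),(2,4),(3,4)]"

definition in_class_C :: "'a set \<Rightarrow> ('a \<Rightarrow> 'a \<Rightarrow> bool) \<Rightarrow> bool" where
  "in_class_C V E \<longleftrightarrow> graph V E \<and>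
     \<not> has_induced V E 4 claw \<and> \<not> has_induced V E 4 fourK1 \<and>
     \<not> has_induced V E 6 wheel5 \<and> \<not> has_induced V E 6 C5_twin \<and>
     \<not> has_induced V E 6 P5_twin \<and> \<not> has_induced V E 5 K5_minus_e"

text \<open>c : nat \<Rightarrow> 'a lists the vertices c 0, ..., c 4 of an induced C5 in cyclic order
  (indices mod 5).\<close>
definition induced_C5 :: "'a set \<Rightarrow> ('a \<Rightarrow> 'a \<Rightarrow> bool) \<Rightarrow> (nat \<Rightarrow> 'a) \<Rightarrow> bool" where
  "induced_C5 V E c \<longleftrightarrow> inj_on c {0..<5} \<and> c ` {0..<5} \<subseteq> V \<and>
     (\<forall>i<5. \<forall>j<5. E (c i) (c j) \<longleftrightarrow> (j = (i + 1) mod 5 \<or> i = (j + 1) mod 5))"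

definition nbrs_C :: "('a \<Rightarrow> 'a \<Rightarrow> bool) \<Rightarrow> (nat \<Rightarrow> 'a) \<Rightarrow> 'a \<Rightarrow> nat set" where
  "nbrs_C E c v = {i. i < 5 \<and> E v (c i)}"

definition R_set :: "'a set \<Rightarrow> ('a \<Rightarrow> 'a \<Rightarrow> bool) \<Rightarrow> (nat \<Rightarrow> 'a) \<Rightarrow> 'a set" where
  "R_set V E c = {v \<in> V - c ` {0..<5}. nbrs_C E c v = {}}"

definition X_j :: "'a set \<Rightarrow> ('a \<Rightarrow> 'a \<Rightarrow> bool) \<Rightarrow> (nat \<Rightarrow> 'a) \<Rightarrow> nat \<Rightarrow> 'a set" where
  "X_j V E c j = {v \<in> V - c ` {0..<5}. nbrs_C E c v = {j mod 5, (j + 1) mod 5}}"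

definition X_set :: "'a set \<Rightarrow> ('a \<Rightarrow> 'a \<Rightarrow> bool) \<Rightarrow> (nat \<Rightarrow> 'a) \<Rightarrow> 'a set" where
  "X_set V E c = (\<Union>j<5. X_j V E c j)"

end

theory Submission
  imports Defs
begin

lemma lt4: "(i::nat) < 4 \<longleftrightarrow> i = 0 \<or> i = 1 \<or> i = 2 \<or> i = 3" by auto
lemma lt5: "(i::nat) < 5 \<longleftrightarrow> i = 0 \<or> i = 1 \<or> i = 2 \<or> i = 3 \<or> i = 4" by auto

lemma graph_sym: "graph V E \<Longrightarrow> E x y \<Longrightarrow> E y x" by (auto simp: graph_def)
lemma graph_irr: "graph V E \<Longrightarrow> \<not> E x x" by (auto simp: graph_def)

lemma claw_no:
  assumes "\<not> has_induced V E 4 claw" "graph V E" "a\<in>V" "b\<in>V" "c\<in>V" "d\<in>V"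
    "E a b" "E a c" "E a d" "\<not>E b c" "\<not>E b d" "\<not>E c d" "b\<noteq>c" "b\<noteq>d" "c\<noteq>d"
  shows False
proof -
  have s: "E b a" "E c a" "E d a" "\<not> E c b" "\<not> E d b" "\<not> E d c"
    using assms graph_sym by metis+
  have d: "a \<noteq> b" "a \<noteq> c" "a \<noteq> d" using assms graph_irr by metis+
  have "has_induced V E 4 claw"
    unfolding has_induced_def
    apply (rule exI[of _ "\<lambda>i. [a,b,c,d] ! i"])
    using assms s d graph_irr[OF assms(2)]
    by (auto simp: lt4 claw_def edges_of_def inj_on_def)
  with assms show False by simp
qed

lemma fourK1_no:
  assumes "\<not> has_induced V E 4 fourK1" "graph V E" "a\<in>V" "b\<in>V" "c\<in>V" "d\<in>V"
    "\<not>E a b" "\<not>E a c" "\<not>E a d" "\<not>E b c" "\<not>E b d" "\<not>E c d"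
    "a\<noteq>b" "a\<noteq>c" "a\<noteq>d" "b\<noteq>c" "b\<noteq>d" "c\<noteq>d"
  shows False
proof -
  have s: "\<not>E b a" "\<not>E c a" "\<not>E d a" "\<not> E c b" "\<not> E d b" "\<not> E d c"
    using assms graph_sym by metis+
  have "has_induced V E 4 fourK1"
    unfolding has_induced_def
    apply (rule exI[of _ "\<lambda>i. [a,b,c,d] ! i"])
    using assms s graph_irr[OF assms(2)]
    by (auto simp: lt4 fourK1_def edges_of_def inj_on_def)
  with assms show False by simp
qed

lemma K5e_no:
  assumes "\<not> has_induced V E 5 K5_minus_e" "graph V E" "a\<in>V" "b\<in>V" "c\<in>V" "d\<in>V" "e\<in>V"
    "\<not>E a b" "E a c" "E a d" "E a e" "E b c" "E b d" "E b e" "E c d" "E c e" "E d e"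
    "a\<noteq>b" "c\<noteq>d" "c\<noteq>e" "d\<noteq>e"
  shows False
proof -
  have s: "\<not>E b a" "E c a" "E d a" "E e a" "E c b" "E d b" "E e b" "E d c" "E e c" "E e d"
    using assms graph_sym by metis+
  have d: "a \<noteq> c" "a \<noteq> d" "a \<noteq> e" "b \<noteq> c" "b \<noteq> d" "b \<noteq> e"
    using assms graph_irr by metis+
  have "has_induced V E 5 K5_minus_e"
    unfolding has_induced_def
    apply (rule exI[of _ "\<lambda>i. [a,b,c,d,e] ! i"])
    using assms s d graph_irr[OF assms(2)]
    by (auto simp: lt5 K5_minus_e_def edges_of_def inj_on_def)
  with assms show False by simp
qed


lemma R_facts:
  assumes "r \<in> R_set V E c"
  shows "r \<in> V" "r \<notin> c ` {0..<5}" "\<And>i. i < 5 \<Longrightarrow> \<not> E r (c i)"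
  using assms by (auto simp: R_set_def nbrs_C_def)

lemma X_facts:
  assumes "x \<in> X_set V E c"
  obtains j where "j < 5" "x \<in> V" "x \<notin> c ` {0..<5}"
    "\<And>k. k < 5 \<Longrightarrow> E x (c k) \<longleftrightarrow> k = j \<or> k = (j+1) mod 5"
proof -
  from assms obtain j where j: "j<5" "x \<in> X_j V E c j" by (auto simp: X_set_def)
  hence x: "x \<in> V" "x \<notin> c ` {0..<5}" "nbrs_C E c x = {j, (j+1) mod 5}"
    by (auto simp: X_j_def)
  have "E x (c k) \<longleftrightarrow> k = j \<or> k = (j+1) mod 5" if "k<5" for k
  proof -
    have "k \<in> nbrs_C E c x \<longleftrightarrow> E x (c k)" using that by (simp add: nbrs_C_def)
    thus ?thesis using x(3) by auto
  qed
  thus ?thesis using that j x by blast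
qed

lemma pat5:
  fixes P :: "nat \<Rightarrow> bool"
  assumes ne: "P 0 \<or> P 1 \<or> P 2 \<or> P 3 \<or> P 4"
  and p1: "\<not> (P 0 \<and> P 2)" "\<not> (P 1 \<and> P 3)" "\<not> (P 2 \<and> P 4)" "\<not> (P 3 \<and> P 0)" "\<not> (P 4 \<and> P 1)"
  and p2: "P 0 \<longrightarrow> P 1 \<or> P 4" "P 1 \<longrightarrow> P 2 \<or> P 0" "P 2 \<longrightarrow> P 3 \<or> P 1" "P 3 \<longrightarrow> P 4 \<or> P 2" "P 4 \<longrightarrow> P 0 \<or> P 3"
  shows "\<exists>j<5. \<forall>k<5. P k \<longleftrightarrow> k = j \<or> k = (j+1) mod 5"
proof -
  have "(P 0 \<and> P 1 \<and> \<not>P 2 \<and> \<not>P 3 \<and> \<not> P 4) \<or> (\<not>P 0 \<and> P 1 \<and> P 2 \<and> \<not>P 3 \<and> \<not> P 4)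
   \<or> (\<not>P 0 \<and> \<not>P 1 \<and> P 2 \<and> P 3 \<and> \<not> P 4) \<or> (\<not>P 0 \<and> \<not>P 1 \<and> \<not>P 2 \<and> P 3 \<and> P 4)
   \<or> (P 0 \<and> \<not>P 1 \<and> \<not>P 2 \<and> \<not>P 3 \<and> P 4)" using ne p1 p2 by blast
  thus ?thesis
  proof (elim disjE)
    assume h: "P 0 \<and> P 1 \<and> \<not>P 2 \<and> \<not>P 3 \<and> \<not> P 4"
    show ?thesis by (rule exI[of _ 0]) (use h in \<open>auto simp: lt5\<close>)
  next
    assume h: "\<not>P 0 \<and> P 1 \<and> P 2 \<and> \<not>P 3 \<and> \<not> P 4"
    show ?thesis by (rule exI[of _ 1]) (use h in \<open>auto simp: lt5\<close>)
  next
    assume h: "\<not>P 0 \<and> \<not>P 1 \<and> P 2 \<and> P 3 \<and> \<not> P 4"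
    show ?thesis by (rule exI[of _ 2]) (use h in \<open>auto simp: lt5\<close>)
  next
    assume h: "\<not>P 0 \<and> \<not>P 1 \<and> \<not>P 2 \<and> P 3 \<and> P 4"
    show ?thesis by (rule exI[of _ 3]) (use h in \<open>auto simp: lt5\<close>)
  next
    assume h: "P 0 \<and> \<not>P 1 \<and> \<not>P 2 \<and> \<not>P 3 \<and> P 4"
    show ?thesis by (rule exI[of _ 4]) (use h in \<open>auto simp: lt5\<close>)
  qed
qed

lemma p12:
  fixes c :: "nat \<Rightarrow> 'b" assumes P1: "\<forall>i<5. \<not> (E z (c i) \<and> E z (c ((i+2) mod 5)))"
 and P2: "\<forall>i<5. E z (c i) \<longrightarrow> E z (c ((i+1) mod 5)) \<or> E z (c ((i+4) mod 5))"
shows "\<not> (E z (c 0) \<and> E z (c 2))" "\<not> (E z (c 1) \<and> E z (c 3))" "\<not> (E z (c 2) \<and> E z (c 4))"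
        "\<not> (E z (c 3) \<and> E z (c 0))" "\<not> (E z (c 4) \<and> E z (c 1))"
 "E z (c 0) \<longrightarrow> E z (c 1) \<or> E z (c 4)" "E z (c 1) \<longrightarrow> E z (c 2) \<or> E z (c 0)"
        "E z (c 2) \<longrightarrow> E z (c 3) \<or> E z (c 1)" "E z (c 3) \<longrightarrow> E z (c 4) \<or> E z (c 2)"
        "E z (c 4) \<longrightarrow> E z (c 0) \<or> E z (c 3)"
proof -
  have P1': "\<not> (E z (c i) \<and> E z (c j))" if "i<5" "j = (i+2) mod 5" for i j using P1 that by blast
  have P2': "E z (c i) \<longrightarrow> E z (c j) \<or> E z (c k)" if "i<5" "j = (i+1) mod 5" "k = (i+4) mod 5" for i j k
    using P2 that by blast
  show "\<not> (E z (c 0) \<and> E z (c 2))" by (rule P1') simp_all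
  show "\<not> (E z (c 1) \<and> E z (c 3))" by (rule P1') simp_all
  show "\<not> (E z (c 2) \<and> E z (c 4))" by (rule P1') simp_all
  show "\<not> (E z (c 3) \<and> E z (c 0))" by (rule P1') simp_all
  show "\<not> (E z (c 4) \<and> E z (c 1))" by (rule P1') simp_all
  show "E z (c 0) \<longrightarrow> E z (c 1) \<or> E z (c 4)" by (rule P2') simp_all
  show "E z (c 1) \<longrightarrow> E z (c 2) \<or> E z (c 0)" by (rule P2') simp_all
  show "E z (c 2) \<longrightarrow> E z (c 3) \<or> E z (c 1)" by (rule P2') simp_all
  show "E z (c 3) \<longrightarrow> E z (c 4) \<or> E z (c 2)" by (rule P2') simp_all
  show "E z (c 4) \<longrightarrow> E z (c 0) \<or> E z (c 3)" by (rule P2') simp_all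
qed

theorem claim16:
  fixes V :: "'a set" and E :: "'a \<Rightarrow> 'a \<Rightarrow> bool" and c :: "nat \<Rightarrow> 'a"
  assumes "in_class_C V E"
    and "connected_on V E"
    and "induced_C5 V E c"
    and "X_set V E c \<noteq> {}"
  shows "card (R_set V E c) \<le> 2 \<or> clique_cutset V E (X_set V E c)"
proof -
  have G: "graph V E" and ncl: "\<not> has_induced V E 4 claw" and n4: "\<not> has_induced V E 4 fourK1"
    and nk: "\<not> has_induced V E 5 K5_minus_e" using assms(1) by (auto simp: in_class_C_def)
  have cV: "\<And>i. i<5 \<Longrightarrow> c i \<in> V" and cinj: "inj_on c {0..<5}"
    and cadj: "\<And>i j. i<5 \<Longrightarrow> j<5 \<Longrightarrow> E (c i) (c j) \<longleftrightarrow> (j = (i + 1) mod 5 \<or> i = (j + 1) mod 5)"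
    using assms(3) by (auto simp: induced_C5_def)
  have cne: "\<And>i j. i<5 \<Longrightarrow> j<5 \<Longrightarrow> i \<noteq> j \<Longrightarrow> c i \<noteq> c j"
    using cinj by (auto simp: inj_on_def)
  have cimg: "\<And>v i. v \<notin> c ` {0..<5} \<Longrightarrow> i < 5 \<Longrightarrow> v \<noteq> c i" by auto
  have XR: "E x r" if x: "x \<in> X_set V E c" and r: "r \<in> R_set V E c" for x r
  proof (rule ccontr)
    assume nxr: "\<not> E x r"
    obtain j where j: "j < 5" "x \<in> V" "x \<notin> c ` {0..<5}"
      "\<And>k. k < 5 \<Longrightarrow> E x (c k) \<longleftrightarrow> k = j \<or> k = (j+1) mod 5" using X_facts[OF x] by blast
    note rf = R_facts[OF r]
    have xr: "x \<noteq> r" using j(4)[of j] j(1) rf(3)[of j] by auto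
    let ?a = "(j+2) mod 5" and ?b = "(j+4) mod 5"
    have ab: "?a < 5" "?b < 5" "?a \<noteq> ?b" "\<not> E (c ?a) (c ?b)" "\<not> E x (c ?a)" "\<not> E x (c ?b)"
      using j(1) j(4)[of ?a] j(4)[of ?b] cadj[of ?a ?b] by (auto simp: lt5)
    show False
      apply (rule fourK1_no[OF n4 G j(2) rf(1) cV[OF ab(1)] cV[OF ab(2)]])
      using nxr ab rf xr cimg[OF j(3)] cimg[OF rf(2)] cne by auto
  qed
  have Rcl: "z \<in> R_set V E c" if y: "y \<in> R_set V E c" and yz: "E y z" and zV: "z \<in> V"
    and zX: "z \<notin> X_set V E c" for y z
  proof -
    note yf = R_facts[OF y]
    have zy: "E z y" using G yz graph_sym by metis
    have zc: "z \<notin> c ` {0..<5}" using yf(3) yz by auto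
    have P1: "\<not> (E z (c i) \<and> E z (c ((i+2) mod 5)))" if "i<5" for i
    proof
      assume h: "E z (c i) \<and> E z (c ((i+2) mod 5))"
      have ii: "(i+2) mod 5 < 5" "\<not> E (c i) (c ((i+2) mod 5))" "i \<noteq> (i+2) mod 5"
        using that cadj[of i "(i+2) mod 5"] by (auto simp: lt5)
      show False
        apply (rule claw_no[OF ncl G zV yf(1) cV[OF that] cV[OF ii(1)]])
        using h zy ii yf(3) cimg[OF yf(2)] that cne[OF that ii(1) ii(3)] by auto
    qed
    have P2: "E z (c ((i+1) mod 5)) \<or> E z (c ((i+4) mod 5))" if "i<5" "E z (c i)" for i
    proof (rule ccontr)
      assume h: "\<not> (E z (c ((i+1) mod 5)) \<or> E z (c ((i+4) mod 5)))"
      have ii: "(i+1) mod 5 < 5" "(i+4) mod 5 < 5" "\<not> E (c ((i+1) mod 5)) (c ((i+4) mod 5))"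
        "(i+1) mod 5 \<noteq> (i+4) mod 5"
        "E (c i) (c ((i+1) mod 5))" "E (c i) (c ((i+4) mod 5))"
        using that cadj[of "(i+1) mod 5" "(i+4) mod 5"] cadj[of i "(i+1) mod 5"]
          cadj[of i "(i+4) mod 5"] by (auto simp: lt5)
      have czs: "E (c i) z" using G that(2) graph_sym by metis
      show False
        apply (rule claw_no[OF ncl G cV[OF that(1)] zV cV[OF ii(1)] cV[OF ii(2)]])
        using h czs ii cimg[OF zc] cne[OF ii(1) ii(2) ii(4)] G graph_sym by metis+
    qed
    have nb: "nbrs_C E c z = {k. k<5 \<and> E z (c k)}" by (simp add: nbrs_C_def)
    have inX: "z \<in> X_set V E c" if "nbrs_C E c z = {j mod 5, (j+1) mod 5}" "j < 5" for j
      using that zV zc by (auto simp: X_set_def X_j_def)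
    have "nbrs_C E c z = {}"
    proof (rule ccontr)
      assume ne: "nbrs_C E c z \<noteq> {}"
      have P1a: "\<forall>i<5. \<not> (E z (c i) \<and> E z (c ((i+2) mod 5)))" using P1 by blast
      have P2a: "\<forall>i<5. E z (c i) \<longrightarrow> E z (c ((i+1) mod 5)) \<or> E z (c ((i+4) mod 5))" using P2 by blast
      note pp = p12[where E=E and z=z and c=c, OF P1a P2a]
      have p1: "\<not> (E z (c 0) \<and> E z (c 2))" "\<not> (E z (c 1) \<and> E z (c 3))" "\<not> (E z (c 2) \<and> E z (c 4))"
        "\<not> (E z (c 3) \<and> E z (c 0))" "\<not> (E z (c 4) \<and> E z (c 1))" using pp(1-5) .
      have p2: "E z (c 0) \<longrightarrow> E z (c 1) \<or> E z (c 4)" "E z (c 1) \<longrightarrow> E z (c 2) \<or> E z (c 0)"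
        "E z (c 2) \<longrightarrow> E z (c 3) \<or> E z (c 1)" "E z (c 3) \<longrightarrow> E z (c 4) \<or> E z (c 2)"
        "E z (c 4) \<longrightarrow> E z (c 0) \<or> E z (c 3)" using pp(6-10) .
      have ne': "E z (c 0) \<or> E z (c 1) \<or> E z (c 2) \<or> E z (c 3) \<or> E z (c 4)"
        using ne unfolding nb by (auto simp: lt5)
      obtain j where j: "j<5" "\<forall>k<5. E z (c k) \<longleftrightarrow> k = j \<or> k = (j+1) mod 5"
        using pat5[of "\<lambda>k. E z (c k)", OF ne' p1 p2] by blast
      have "nbrs_C E c z = {j mod 5, (j+1) mod 5}" unfolding nb using j by auto
      hence "\<exists>j<5. nbrs_C E c z = {j mod 5, (j+1) mod 5}" using j(1) by blast
      then show False using inX zX by blast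
    qed
    thus ?thesis using zV zc by (simp add: R_set_def)
  qed
  show ?thesis
  proof (cases "card (R_set V E c) \<le> 2")
    case True thus ?thesis by simp
  next
    case False
    have finR: "finite (R_set V E c)" using G by (auto simp: graph_def R_set_def)
    from False have "Suc (Suc (Suc 0)) \<le> card (R_set V E c)" by simp
    then obtain r1 r2 r3 where rs: "r1 \<in> R_set V E c" "r2 \<in> R_set V E c" "r3 \<in> R_set V E c"
      "r1 \<noteq> r2" "r1 \<noteq> r3" "r2 \<noteq> r3"
      by (auto simp: card_le_Suc_iff)
    have Rc: "E a b" if "a \<in> R_set V E c" "b \<in> R_set V E c" "a \<noteq> b" for a b
    proof (rule ccontr)
      assume "\<not> E a b"
      note af = R_facts[OF that(1)] and bf = R_facts[OF that(2)]
      have "\<not> E (c 0) (c 2)" using cadj[of 0 2] by simp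
      show False
        apply (rule fourK1_no[OF n4 G af(1) bf(1) cV[of 0] cV[of 2]])
        using \<open>\<not> E a b\<close> \<open>\<not> E (c 0) (c 2)\<close> af bf that cimg[OF af(2)] cimg[OF bf(2)] cne[of 0 2] by auto
    qed
    have clq: "clique (X_set V E c) E"
      unfolding clique_def
    proof (intro ballI impI)
      fix x x' assume x: "x \<in> X_set V E c" and x': "x' \<in> X_set V E c" and ne: "x \<noteq> x'"
      show "E x x'"
      proof (rule ccontr)
        assume nx: "\<not> E x x'"
        have xV: "x \<in> V" "x' \<in> V" using x x' by (auto simp: X_set_def X_j_def)
        show False
          apply (rule K5e_no[OF nk G xV(1) xV(2) R_facts(1)[OF rs(1)] R_facts(1)[OF rs(2)] R_facts(1)[OF rs(3)]])
          using nx XR x x' rs Rc ne by auto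
      qed
    qed
    have XV: "X_set V E c \<subseteq> V" by (auto simp: X_set_def X_j_def)
    have reachR0: "w \<in> R_set V E c" if "reach E (V - X_set V E c) a w" "a = r1" for a w
      using that
    proof (induction rule: reach.induct)
      case (refl x) thus ?case using rs(1) by simp
    next
      case (step x y z) thus ?case using Rcl by blast
    qed
    have reachR: "w \<in> R_set V E c" if "reach E (V - X_set V E c) r1 w" for w
      using reachR0 that by blast
    have r1X: "r1 \<in> V - X_set V E c" using rs(1) by (auto simp: R_set_def X_set_def X_j_def)
    have c0X: "c 0 \<in> V - X_set V E c" using cV[of 0] by (auto simp: X_set_def X_j_def)
    have "c 0 \<notin> R_set V E c" by (auto simp: R_set_def)
    hence "\<not> reach E (V - X_set V E c) r1 (c 0)" using reachR by blast
    thus ?thesis using clq XV r1X c0X unfolding clique_cutset_def by blast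
  qed
qed

end
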